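(* Let $L\ge2$ be an integer. Let $\bm{\xi}=\{\xi_{M,U}:(M,U)\in\mathcal{M}\times\mathcal{U},\ 0\le c(M,U)\le1\}$ be real constants with $|\xi_{M,U}|\le1$. Suppose $\eta_2$ and $\{\delta_2(N)\}_{N=1,2,\dots}$ satisfy $\exp[-N\delta_2(N)]\le\eta_2$ for all $N\ge 1$. If the random variables $(N,m^N,u^N,x^N)$ described in the context satisfy, for $N\ge1$, $$\Pr\{x^N\mid N,m^N,u^N\}=\prod_{k=1}^N[c(m_k,u_k)]^{x_k}[1-c(m_k,u_k)]^{1-x_k},$$ then $$\Pr\{N\ge1,\ \tilde P_{m^N,u^N,x^N}\notin\mathcal{P}^{\bm{\xi},\delta_2(N)}\}\le\eta_2.$$
   Context: For a finite set $\Omega$, $\mathcal{P}_\Omega$ is the set of probability mass functions on $\Omega$; for $\omega^n\in\Omega^n$ the type is $\tilde P_{\omega^n}(\omega)=\frac1n|\{i:\omega_i=\omega\}|$ ($\tilde P_{m^N,u^N,x^N}$ is the type of the sequence of triples $(m_k,u_k,x_k)$). Let $\mathcal{M}=\{0,\dots,L\}$, $\mathcal{U}=\mathcal{X}=\{0,1\}$, $\mathcal{W}=\{(M,U,X)\in\mathcal{M}\times\mathcal{U}\times\mathcal{X}:0\le M-U-X\le L-2\}$, and $c(M,U):=(M-U)/(L-1)$. For $P\in\mathcal{P}_{\mathcal{W}}$, $P_{\mathcal{M}\times\mathcal{U}}$ is the distribution of $(M,U)$ under $P$. Random variables: on a probability space (probability $\Pr$), $N$ is a non-negative integer and when $N\ge1$,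 $m^N\in\mathcal{M}^N$, $u^N\in\mathcal{U}^N$, $x^N\in\mathcal{X}^N$ with $(m_k,u_k,x_k)\in\mathcal{W}$ for all $k$. $\mathcal{P}^{\bm{\xi},\delta_2}:=\{P\in\mathcal{P}_{\mathcal{W}}: \mathbb{E}_{(M,U,X)\sim P}[(X-c(M,U))\xi_{M,U}]\le\frac{\delta_2}{3}+[(\frac{\delta_2}{3})^2+2\delta_2\,\mathbb{E}_{(M,U)\sim P_{\mathcal{M}\times\mathcal{U}}}[c(M,U)(1-c(M,U))\xi_{M,U}^2]]^{1/2}\}$. *)

theory Defs
  imports "HOL-Probability.Probability"
begin

definition W :: "nat \<Rightarrow> (nat \<times> nat \<times> nat) set" where
  "W L = {(M, U, X). M \<le> L \<and> U \<le> 1 \<and> X \<le> 1 \<and>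
            0 \<le> int M - int U - int X \<and> int M - int U - int X \<le> int L - 2}"

definition cc :: "nat \<Rightarrow> nat \<Rightarrow> nat \<Rightarrow> real" where
  "cc L M U = (real M - real U) / (real L - 1)"

definition PW :: "nat \<Rightarrow> ((nat \<times> nat \<times> nat) \<Rightarrow> real) set" where
  "PW L = {P. (\<forall>w. 0 \<le> P w) \<and> (\<forall>w. w \<notin> W L \<longrightarrow> P w = 0) \<and> (\<Sum>w\<in>W L. P w) = 1}"

text \<open>The set P^{xi,delta2}. The expectation over the (M,U)-marginal is written as
  a sum over W with the joint weights (which is what it unfolds to).\<close>
definition Pxi :: "nat \<Rightarrow> (nat \<Rightarrow> nat \<Rightarrow> real) \<Rightarrow> real \<Rightarrow> ((nat \<times> nat \<times> nat) \<Rightarrow> real) set" where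
  "Pxi L xi d = {P \<in> PW L.
     (\<Sum>(M, U, X)\<in>W L. P (M, U, X) * ((real X - cc L M U) * xi M U))
       \<le> d / 3 + sqrt ((d / 3)\<^sup>2 + 2 * d *
            (\<Sum>(M, U, X)\<in>W L. P (M, U, X) * (cc L M U * (1 - cc L M U) * (xi M U)\<^sup>2)))}"

definition seqtype :: "'a list \<Rightarrow> 'a \<Rightarrow> real" where
  "seqtype ws t = real (length (filter (\<lambda>v. v = t) ws)) / real (length ws)"

definition mu_of :: "(nat \<times> nat \<times> nat) list \<Rightarrow> (nat \<times> nat) list" where
  "mu_of ws = map (\<lambda>(m, u, x). (m, u)) ws"

end

theory Submission imports Defs begin

lemma summable_exp_shift2: "summable (\<lambda>n. inverse (fact (n + 2)) * (x::real) ^ (n + 2))"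
  using summable_exp[of x] summable_iff_shift[of "\<lambda>n. inverse (fact n) * x ^ n" 2] by simp

lemma exp_quad_bound:
  fixes l y :: real
  assumes l: "0 \<le> l" and y: "\<bar>y\<bar> \<le> 1"
  shows "exp (l * y) \<le> 1 + l * y + y\<^sup>2 * (exp l - 1 - l)"
proof -
  have e1: "exp (l*y) = 1 + l*y + (\<Sum>n. inverse (fact (n + 2)) * (l*y) ^ (n + 2))"
    using exp_first_two_terms[of "l*y"] by simp
  have e2: "exp l - 1 - l = (\<Sum>n. inverse (fact (n + 2)) * l ^ (n + 2))"
    using exp_first_two_terms[of l] by simp
  have "(\<Sum>n. inverse (fact (n + 2)) * (l*y) ^ (n + 2)) \<le> (\<Sum>n. y\<^sup>2 * (inverse (fact (n + 2)) * l ^ (n + 2)))"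
  proof (rule suminf_le)
    fix n
    have "y ^ n \<le> 1" using y
      by (metis abs_le_D1 abs_power_minus abs_ge_zero le_less_trans order.refl power_le_one_iff abs_power2 power_abs)
    have a: "(l*y)^(n+2) = l^(n+2) * y^n * y\<^sup>2" by (simp add: power_mult_distrib power_add power2_eq_square)
    have "l^(n+2) * y^n * y\<^sup>2 \<le> l^(n+2) * 1 * y\<^sup>2"
      using \<open>y^n \<le> 1\<close> l by (intro mult_right_mono mult_left_mono) auto
    then have b: "inverse (fact (n + 2)) * (l*y)^(n+2) \<le> inverse (fact (n + 2)) * (l^(n+2) * 1 * y\<^sup>2)"
      unfolding a by (intro mult_left_mono) auto
    have eq: "y\<^sup>2 * (inverse (fact (n + 2)) * l ^ (n + 2)) = inverse (fact (n + 2)) * (l^(n+2) * 1 * y\<^sup>2)"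
      by simp
    show "inverse (fact (n + 2)) * (l*y) ^ (n + 2) \<le> y\<^sup>2 * (inverse (fact (n + 2)) * l ^ (n + 2))"
      using b eq by linarith
  next
    show "summable (\<lambda>n. inverse (fact (n + 2)) * (l*y) ^ (n + 2))" by (rule summable_exp_shift2)
    show "summable (\<lambda>n. y\<^sup>2 * (inverse (fact (n + 2)) * l ^ (n + 2)))"
      by (rule summable_mult[OF summable_exp_shift2])
  qed
  also have "\<dots> = y\<^sup>2 * (exp l - 1 - l)" unfolding e2 by (rule suminf_mult[OF summable_exp_shift2])
  finally show ?thesis using e1 by linarith
qed

lemma fact_ge: "2 * 3 ^ n \<le> (fact (n + 2) :: real)"
proof (induction n)
  case 0 then show ?case by simp
next
  case (Suc n)
  have e: "(fact (Suc n + 2)::real) = of_nat (Suc (n+2)) * fact (n+2)"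
    using fact_Suc[of "n+2"] by simp
  have "3 * (2 * 3^n) \<le> (of_nat (Suc (n+2))::real) * fact (n+2)"
    using Suc by (intro mult_mono) auto
  then show ?case using e by simp
qed

lemma phi_bound:
  fixes l :: real
  assumes "0 \<le> l" "l < 3"
  shows "exp l - 1 - l \<le> l\<^sup>2 / (2 * (1 - l / 3))"
proof -
  have e2: "exp l - 1 - l = (\<Sum>n. inverse (fact (n + 2)) * l ^ (n + 2))"
    using exp_first_two_terms[of l] by simp
  have g: "(\<lambda>n. (l/3)^n) sums (1 / (1 - l/3))" using assms by (intro geometric_sums) auto
  have "(\<Sum>n. inverse (fact (n + 2)) * l ^ (n + 2)) \<le> (\<Sum>n. l\<^sup>2/2 * (l/3)^n)"
  proof (rule suminf_le)
    fix n
    have "inverse (fact (n + 2)) \<le> inverse (2 * 3 ^ n :: real)"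
      using fact_ge[of n] by (intro le_imp_inverse_le) auto
    then have "inverse (fact (n + 2)) * l ^ (n + 2) \<le> inverse (2 * 3 ^ n :: real) * l^(n+2)"
      using assms by (intro mult_right_mono) auto
    also have "\<dots> = l\<^sup>2/2 * (l/3)^n" by (simp add: power_add power_divide field_simps power2_eq_square)
    finally show "inverse (fact (n + 2)) * l ^ (n + 2) \<le> l\<^sup>2/2 * (l/3)^n" .
  next
    show "summable (\<lambda>n. inverse (fact (n + 2)) * l ^ (n + 2))" by (rule summable_exp_shift2)
    show "summable (\<lambda>n. l\<^sup>2/2 * (l/3)^n)" using g by (intro summable_mult) (auto simp: sums_iff)
  qed
  also have "\<dots> = l\<^sup>2/2 * (1 / (1 - l/3))" using sums_unique[OF sums_mult[OF g, of "l\<^sup>2/2"]] by simp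
  finally show ?thesis using e2 by simp
qed



definition valid :: "nat \<Rightarrow> nat \<times> nat \<Rightarrow> bool" where
  "valid L mu \<longleftrightarrow> (\<exists>x. (fst mu, snd mu, x) \<in> W L)"

fun K :: "nat \<Rightarrow> (nat \<times> nat) list \<Rightarrow> (nat \<times> nat \<times> nat) list pmf" where
  "K L [] = return_pmf []"
| "K L (mu # rest) = bind_pmf (bernoulli_pmf (cc L (fst mu) (snd mu)))
     (\<lambda>b. map_pmf (\<lambda>xs. (fst mu, snd mu, if b then 1 else 0) # xs) (K L rest))"

lemma valid_facts:
  assumes L: "L \<ge> 2" and v: "valid L (m, u)"
  shows "m \<le> L" "u \<le> 1" "0 \<le> cc L m u" "cc L m u \<le> 1"
    "0 < cc L m u \<Longrightarrow> (m, u, 1) \<in> W L" "cc L m u < 1 \<Longrightarrow> (m, u, 0) \<in> W L"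
proof -
  obtain x where x: "(m, u, x) \<in> W L" using v by (auto simp: valid_def)
  then have h: "m \<le> L" "u \<le> 1" "x \<le> 1" "0 \<le> int m - int u - int x" "int m - int u - int x \<le> int L - 2"
    by (auto simp: W_def)
  have Lp: "real L - 1 > 0" using L by simp
  have um: "u \<le> m" "m - u \<le> L - 1" using h by auto
  have c: "cc L m u = real (m - u) / (real L - 1)" using um by (simp add: cc_def of_nat_diff)
  show "m \<le> L" "u \<le> 1" using h by auto
  show "0 \<le> cc L m u" using Lp c by simp
  have "real (m - u) \<le> real L - 1" using um L by linarith
  then show "cc L m u \<le> 1" using Lp c by (simp add: divide_le_eq_1)
  show "0 < cc L m u \<Longrightarrow> (m, u, 1) \<in> W L"
  proof -
    assume "0 < cc L m u"
    then have "m - u > 0" using c Lp by (simp add: zero_less_divide_iff)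
    then show ?thesis using h um L by (auto simp: W_def)
  qed
  show "cc L m u < 1 \<Longrightarrow> (m, u, 0) \<in> W L"
  proof -
    assume "cc L m u < 1"
    then have "real (m - u) < real L - 1" using c Lp by (simp add: divide_less_eq_1)
    then have "m - u \<le> L - 2" by linarith
    then show ?thesis using h um L by (auto simp: W_def)
  qed
qed

lemma setK:
  assumes L: "L \<ge> 2"
  shows "\<forall>p\<in>set mus. valid L p \<Longrightarrow> ws \<in> set_pmf (K L mus) \<Longrightarrow> set ws \<subseteq> W L \<and> mu_of ws = mus"
proof (induction mus arbitrary: ws)
  case Nil then show ?case by (simp add: mu_of_def)
next
  case (Cons mu rest)
  obtain m u where mu: "mu = (m, u)" by force
  have v: "valid L (m, u)" using Cons.prems mu by auto
  from Cons.prems(2) obtain b xs where b: "b \<in> set_pmf (bernoulli_pmf (cc L m u))"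
    and xs: "xs \<in> set_pmf (K L rest)" and ws: "ws = (m, u, if b then 1 else 0) # xs"
    by (auto simp: mu)
  have IH: "set xs \<subseteq> W L \<and> mu_of xs = rest" using Cons.IH[OF _ xs] Cons.prems by auto
  have "(m, u, if b then 1 else 0) \<in> W L"
  proof (cases b)
    case True
    then have "cc L m u \<noteq> 0" using b valid_facts[OF L v] by (auto simp: set_pmf_iff)
    then show ?thesis using True valid_facts[OF L v] by auto
  next
    case False
    then have "cc L m u \<noteq> 1" using b valid_facts[OF L v] by (auto simp: set_pmf_iff)
    then show ?thesis using False valid_facts[OF L v] by auto
  qed
  then show ?case using IH ws mu by (auto simp: mu_of_def)
qed

lemma pmfK:
  assumes L: "L \<ge> 2"
  shows "set ws \<subseteq> W L \<Longrightarrow> pmf (K L (mu_of ws)) ws =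
     (\<Prod>(m, u, x)\<leftarrow>ws. (cc L m u) ^ x * (1 - cc L m u) ^ (1 - x))"
proof (induction ws)
  case Nil then show ?case by (simp add: mu_of_def)
next
  case (Cons w ws)
  obtain m u x where w: "w = (m, u, x)" by (cases w) auto
  have wW: "(m, u, x) \<in> W L" using Cons.prems w by auto
  then have v: "valid L (m, u)" by (auto simp: valid_def)
  have x1: "x \<le> 1" using wW by (auto simp: W_def)
  have mo: "mu_of (w # ws) = (m, u) # mu_of ws" by (simp add: mu_of_def w)
  have IH: "pmf (K L (mu_of ws)) ws = (\<Prod>(m, u, x)\<leftarrow>ws. (cc L m u) ^ x * (1 - cc L m u) ^ (1 - x))"
    using Cons by auto
  have pre: "\<And>b. (\<lambda>xs. (m, u, if b then 1 else 0) # xs) -` {(m, u, x) # ws} =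
       (if (if b then 1 else 0) = x then {ws} else {})" by auto
  have c: "0 \<le> cc L m u" "cc L m u \<le> 1" using valid_facts[OF L v] by auto
  have "pmf (K L ((m, u) # mu_of ws)) ((m, u, x) # ws) =
     (if x = 1 then cc L m u else 1 - cc L m u) * pmf (K L (mu_of ws)) ws"
    using x1 c by (auto simp: pmf_bind pmf_map pre measure_pmf_single le_Suc_eq)
  then show ?case using IH x1 mo by (auto simp: w le_Suc_eq)
qed

definition Yf :: "nat \<Rightarrow> (nat \<Rightarrow> nat \<Rightarrow> real) \<Rightarrow> nat \<times> nat \<times> nat \<Rightarrow> real" where
  "Yf L xi w = (case w of (m, u, x) \<Rightarrow> (real x - cc L m u) * xi m u)"

definition FF :: "nat \<Rightarrow> (nat \<Rightarrow> nat \<Rightarrow> real) \<Rightarrow> (nat \<times> nat \<times> nat) list \<Rightarrow> real" where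
  "FF L xi ws = sum_list (map (Yf L xi) ws)"

definition vf :: "nat \<Rightarrow> (nat \<Rightarrow> nat \<Rightarrow> real) \<Rightarrow> nat \<times> nat \<Rightarrow> real" where
  "vf L xi mu = (case mu of (m, u) \<Rightarrow> cc L m u * (1 - cc L m u) * (xi m u)\<^sup>2)"

definition VV :: "nat \<Rightarrow> (nat \<Rightarrow> nat \<Rightarrow> real) \<Rightarrow> (nat \<times> nat) list \<Rightarrow> real" where
  "VV L xi mus = sum_list (map (vf L xi) mus)"


lemma mix_bound:
  fixes c xi l :: real
  assumes "0 \<le> c" "c \<le> 1" "\<bar>xi\<bar> \<le> 1" "0 \<le> l"
  shows "c * exp (l * ((1 - c) * xi)) + (1 - c) * exp (l * ((0 - c) * xi))
         \<le> exp ((exp l - 1 - l) * (c * (1 - c) * xi\<^sup>2))"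
proof -
  let ?p = "exp l - 1 - l"
  have y1: "\<bar>(1 - c) * xi\<bar> \<le> 1" using assms by (simp add: abs_mult mult_le_one)
  have y0: "\<bar>(0 - c) * xi\<bar> \<le> 1" using assms by (simp add: abs_mult mult_le_one)
  have "c * exp (l * ((1 - c) * xi)) \<le> c * (1 + l * ((1 - c) * xi) + ((1 - c) * xi)\<^sup>2 * ?p)"
    using exp_quad_bound[OF assms(4) y1] assms by (intro mult_left_mono) auto
  moreover have "(1 - c) * exp (l * ((0 - c) * xi)) \<le> (1 - c) * (1 + l * ((0 - c) * xi) + ((0 - c) * xi)\<^sup>2 * ?p)"
    using exp_quad_bound[OF assms(4) y0] assms by (intro mult_left_mono) auto
  moreover have "c * (1 + l * ((1 - c) * xi) + ((1 - c) * xi)\<^sup>2 * ?p) + (1 - c) * (1 + l * ((0 - c) * xi) + ((0 - c) * xi)\<^sup>2 * ?p)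
     = 1 + ?p * (c * (1 - c) * xi\<^sup>2)" by (simp add: algebra_simps power2_eq_square)
  moreover have "1 + ?p * (c * (1 - c) * xi\<^sup>2) \<le> exp (?p * (c * (1 - c) * xi\<^sup>2))"
    by (rule exp_ge_add_one_self)
  ultimately show ?thesis by linarith
qed

lemma mgf:
  assumes L: "L \<ge> 2" and xb: "\<And>m u. valid L (m, u) \<Longrightarrow> \<bar>xi m u\<bar> \<le> 1" and l: "0 \<le> l"
  shows "\<forall>p\<in>set mus. valid L p \<Longrightarrow>
    (\<integral>\<^sup>+ws. ennreal (exp (l * FF L xi ws)) \<partial>K L mus) \<le> ennreal (exp ((exp l - 1 - l) * VV L xi mus))"
proof (induction mus)
  case Nil then show ?case by (simp add: FF_def VV_def)
next
  case (Cons mu rest)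
  obtain m u where mu: "mu = (m, u)" by force
  have v: "valid L (m, u)" using Cons.prems mu by auto
  note vf = valid_facts[OF L v]
  define c where "c = cc L m u"
  define B where "B = exp ((exp l - 1 - l) * VV L xi rest)"
  have IH: "(\<integral>\<^sup>+ws. ennreal (exp (l * FF L xi ws)) \<partial>K L rest) \<le> ennreal B"
    using Cons by (auto simp: B_def)
  define y where "y = (\<lambda>b::bool. ((if b then 1 else 0) - c) * xi m u)"
  have inner: "(\<integral>\<^sup>+xs. ennreal (exp (l * FF L xi ((m, u, if b then 1 else 0) # xs))) \<partial>K L rest)
      \<le> ennreal (exp (l * y b) * B)" for b
  proof -
    have "(\<integral>\<^sup>+xs. ennreal (exp (l * FF L xi ((m, u, if b then 1 else 0) # xs))) \<partial>K L rest)
       = (\<integral>\<^sup>+xs. ennreal (exp (l * y b)) * ennreal (exp (l * FF L xi xs)) \<partial>K L rest)"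
      by (intro nn_integral_cong) (auto simp: FF_def Yf_def y_def c_def distrib_left exp_add ennreal_mult)
    also have "\<dots> = ennreal (exp (l * y b)) * (\<integral>\<^sup>+xs. ennreal (exp (l * FF L xi xs)) \<partial>K L rest)"
      by (rule nn_integral_cmult) auto
    also have "\<dots> \<le> ennreal (exp (l * y b)) * ennreal B"
      using IH by (intro mult_left_mono) auto
    also have "\<dots> = ennreal (exp (l * y b) * B)" by (simp add: ennreal_mult B_def)
    finally show ?thesis .
  qed
  have "(\<integral>\<^sup>+ws. ennreal (exp (l * FF L xi ws)) \<partial>K L (mu # rest))
     = (\<integral>\<^sup>+b. (\<integral>\<^sup>+xs. ennreal (exp (l * FF L xi ((m, u, if b then 1 else 0) # xs))) \<partial>K L rest) \<partial>bernoulli_pmf c)"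
    by (simp add: mu c_def)
  also have "\<dots> \<le> (\<integral>\<^sup>+b. ennreal (exp (l * y b) * B) \<partial>bernoulli_pmf c)"
    by (intro nn_integral_mono inner)
  also have "\<dots> = ennreal (exp (l * y True) * B) * ennreal c + ennreal (exp (l * y False) * B) * ennreal (1 - c)"
    using vf by (simp add: c_def)
  also have "\<dots> = ennreal ((c * exp (l * y True) + (1 - c) * exp (l * y False)) * B)"
    using vf by (simp add: c_def B_def ennreal_mult[symmetric] ennreal_plus[symmetric] algebra_simps del: ennreal_plus)
  also have "\<dots> \<le> ennreal (exp ((exp l - 1 - l) * (c * (1 - c) * (xi m u)\<^sup>2)) * B)"
  proof (intro ennreal_leI mult_right_mono)
    show "c * exp (l * y True) + (1 - c) * exp (l * y False) \<le> exp ((exp l - 1 - l) * (c * (1 - c) * (xi m u)\<^sup>2))"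
      using mix_bound[of c "xi m u" l] vf xb[OF v] l by (simp add: y_def c_def)
  qed (simp add: B_def)
  also have "\<dots> = ennreal (exp ((exp l - 1 - l) * VV L xi (mu # rest)))"
    by (simp add: B_def VV_def vf_def mu c_def exp_add[symmetric] algebra_simps)
  finally show ?case .
qed

lemma chernoff:
  assumes L: "L \<ge> 2" and xb: "\<And>m u. valid L (m, u) \<Longrightarrow> \<bar>xi m u\<bar> \<le> 1" and l: "0 \<le> l"
    and v: "\<forall>p\<in>set mus. valid L p"
  shows "emeasure (K L mus) {ws. t < FF L xi ws} \<le> ennreal (exp (- (l * t) + (exp l - 1 - l) * VV L xi mus))"
proof -
  have "emeasure (K L mus) {ws. t < FF L xi ws} = (\<integral>\<^sup>+ws. indicator {ws. t < FF L xi ws} ws \<partial>K L mus)"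
    by simp
  also have "\<dots> \<le> (\<integral>\<^sup>+ws. ennreal (exp (- (l * t))) * ennreal (exp (l * FF L xi ws)) \<partial>K L mus)"
  proof (intro nn_integral_mono)
    fix ws
    show "indicator {ws. t < FF L xi ws} ws \<le> ennreal (exp (- (l * t))) * ennreal (exp (l * FF L xi ws))"
    proof (cases "t < FF L xi ws")
      case True
      then have "l * t \<le> l * FF L xi ws" using l by (intro mult_left_mono) auto
      then have "1 \<le> exp (- (l * t)) * exp (l * FF L xi ws)" by (simp add: exp_add[symmetric])
      then show ?thesis using True by (simp add: ennreal_mult[symmetric])
    qed simp
  qed
  also have "\<dots> = ennreal (exp (- (l * t))) * (\<integral>\<^sup>+ws. ennreal (exp (l * FF L xi ws)) \<partial>K L mus)"
    by (rule nn_integral_cmult) auto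
  also have "\<dots> \<le> ennreal (exp (- (l * t))) * ennreal (exp ((exp l - 1 - l) * VV L xi mus))"
    using mgf[OF L xb l v] by (intro mult_left_mono) auto
  also have "\<dots> = ennreal (exp (- (l * t) + (exp l - 1 - l) * VV L xi mus))"
    by (subst exp_add) (simp add: ennreal_mult)
  finally show ?thesis .
qed


lemma finite_W: "finite (W L)"
proof -
  have "W L \<subseteq> {..L} \<times> {..1} \<times> {..1}" by (auto simp: W_def)
  then show ?thesis by (rule finite_subset) auto
qed

lemma cnt_sum:
  fixes h :: "'a \<Rightarrow> real"
  assumes "finite A"
  shows "set ws \<subseteq> A \<Longrightarrow> (\<Sum>w\<in>A. real (length (filter (\<lambda>v. v = w) ws)) * h w) = sum_list (map h ws)"
proof (induction ws)
  case Nil then show ?case by simp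
next
  case (Cons a ws)
  have "(\<Sum>w\<in>A. real (length (filter (\<lambda>v. v = w) (a # ws))) * h w)
      = (\<Sum>w\<in>A. (if a = w then h w else 0) + real (length (filter (\<lambda>v. v = w) ws)) * h w)"
    by (intro sum.cong) (auto simp: algebra_simps)
  also have "\<dots> = h a + (\<Sum>w\<in>A. real (length (filter (\<lambda>v. v = w) ws)) * h w)"
    using Cons.prems assms by (simp add: sum.distrib)
  finally show ?case using Cons by simp
qed

lemma seqtype_sum:
  fixes h :: "'a \<Rightarrow> real"
  assumes "finite A" "set ws \<subseteq> A"
  shows "(\<Sum>w\<in>A. seqtype ws w * h w) = sum_list (map h ws) / real (length ws)"
proof -
  have "(\<Sum>w\<in>A. seqtype ws w * h w) = (\<Sum>w\<in>A. real (length (filter (\<lambda>v. v = w) ws)) * h w) / real (length ws)"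
    by (simp add: seqtype_def sum_divide_distrib)
  then show ?thesis using cnt_sum[OF assms(1) assms(2)] by simp
qed

lemma seqtype_PW: "set ws \<subseteq> W L \<Longrightarrow> ws \<noteq> [] \<Longrightarrow> seqtype ws \<in> PW L"
proof -
  assume a: "set ws \<subseteq> W L" "ws \<noteq> []"
  have "(\<Sum>w\<in>W L. seqtype ws w) = (\<Sum>w\<in>W L. seqtype ws w * (\<lambda>_. 1) w)" by simp
  also have "\<dots> = 1" using seqtype_sum[OF finite_W a(1), of "\<lambda>_. 1"] a(2)
    by (simp add: sum_list_triv)
  finally have s: "(\<Sum>w\<in>W L. seqtype ws w) = 1" .
  have z: "w \<notin> W L \<Longrightarrow> seqtype ws w = 0" for w
    using a(1) by (auto simp: seqtype_def filter_empty_conv)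
  show ?thesis using s z by (auto simp: PW_def seqtype_def)
qed

lemma bad_event:
  assumes L: "L \<ge> 2" and v: "\<forall>p\<in>set mus. valid L p" and ne: "mus \<noteq> []"
    and ws: "ws \<in> set_pmf (K L mus)" and bad: "seqtype ws \<notin> Pxi L xi d"
  shows "real (length mus) * (d / 3 + sqrt ((d / 3)\<^sup>2 + 2 * d * (VV L xi mus / real (length mus))))
          < FF L xi ws"
proof -
  have sw: "set ws \<subseteq> W L" and mo: "mu_of ws = mus" using setK[OF L v ws] by auto
  have len: "length ws = length mus" using mo by (auto simp: mu_of_def)
  have wne: "ws \<noteq> []" using mo ne by (auto simp: mu_of_def)
  have PW: "seqtype ws \<in> PW L" by (rule seqtype_PW[OF sw wne])
  have e1: "(\<Sum>(M, U, X)\<in>W L. seqtype ws (M, U, X) * ((real X - cc L M U) * xi M U)) = FF L xi ws / real (length mus)"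
  proof -
    have "(\<Sum>(M, U, X)\<in>W L. seqtype ws (M, U, X) * ((real X - cc L M U) * xi M U))
        = (\<Sum>w\<in>W L. seqtype ws w * Yf L xi w)"
      by (intro sum.cong) (auto simp: Yf_def)
    then show ?thesis using seqtype_sum[OF finite_W sw, of "Yf L xi"] len by (simp add: FF_def)
  qed
  have e2: "(\<Sum>(M, U, X)\<in>W L. seqtype ws (M, U, X) * (cc L M U * (1 - cc L M U) * (xi M U)\<^sup>2)) = VV L xi mus / real (length mus)"
  proof -
    have "(\<Sum>(M, U, X)\<in>W L. seqtype ws (M, U, X) * (cc L M U * (1 - cc L M U) * (xi M U)\<^sup>2))
        = (\<Sum>w\<in>W L. seqtype ws w * (vf L xi \<circ> (\<lambda>(m, u, x). (m, u))) w)"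
      by (intro sum.cong) (auto simp: vf_def)
    also have "\<dots> = sum_list (map (vf L xi \<circ> (\<lambda>(m, u, x). (m, u))) ws) / real (length ws)"
      by (rule seqtype_sum[OF finite_W sw])
    also have "\<dots> = VV L xi (mu_of ws) / real (length (mu_of ws))"
      by (simp add: VV_def mu_of_def)
    also have "\<dots> = VV L xi mus / real (length mus)"
      using mo by simp
    finally show ?thesis .
  qed
  have "\<not> (FF L xi ws / real (length mus) \<le> d / 3 + sqrt ((d / 3)\<^sup>2 + 2 * d * (VV L xi mus / real (length mus))))"
    using bad PW e1 e2 by (simp add: Pxi_def)
  then show ?thesis using ne by (simp add: field_simps)
qed

lemma opt:
  fixes N d V t :: real
  assumes N: "0 < N" and d: "0 < d" and V: "0 \<le> V"
    and t: "t = N * (d / 3 + sqrt ((d / 3)\<^sup>2 + 2 * d * (V / N)))"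
  shows "\<exists>l\<ge>0. - (l * t) + (exp l - 1 - l) * V \<le> - (N * d)"
proof (cases "V = 0")
  case True
  have "sqrt ((d / 3)\<^sup>2) = d / 3" using d by simp
  then have "t = N * (2 * d / 3)" using t True by simp
  then show ?thesis using True by (intro exI[of _ "3/2"]) (simp add: field_simps)
next
  case False
  then have Vp: "0 < V" using V by simp
  define s where "s = sqrt ((d / 3)\<^sup>2 + 2 * d * (V / N))"
  have s0: "0 \<le> s" using d V N by (simp add: s_def)
  have s2: "s\<^sup>2 = (d / 3)\<^sup>2 + 2 * d * (V / N)" unfolding s_def using d V N by (intro real_sqrt_pow2) simp
  have ts: "t = N * (d/3 + s)" unfolding s_def by (rule t)
  have tp: "0 < t" unfolding ts using N d s0 by (intro mult_pos_pos) auto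
  have key: "t\<^sup>2 = 2 * N * d * (V + t / 3)"
  proof -
    have "t = N * (d/3 + s)" by (rule ts)
    then have "t\<^sup>2 = N\<^sup>2 * ((d/3)\<^sup>2 + 2 * (d/3) * s + s\<^sup>2)" by (simp add: power2_eq_square algebra_simps)
    also have "\<dots> = N\<^sup>2 * (2 * (d/3)\<^sup>2 + 2 * (d/3) * s + 2 * d * (V / N))" using s2 by simp
    also have "\<dots> = 2 * N * d * (V + N * (d/3 + s) / 3)" using N by (simp add: power2_eq_square field_simps)
    finally show ?thesis using ts by simp
  qed
  define D where "D = V + t / 3"
  have Dp: "0 < D" using Vp tp by (simp add: D_def)
  define l where "l = t / D"
  have l0: "0 \<le> l" using tp Dp by (simp add: l_def)
  have l3: "l < 3" using Vp tp Dp by (simp add: l_def D_def field_simps)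
  have om: "1 - l / 3 = V / D" using Dp by (simp add: l_def D_def field_simps)
  have "(exp l - 1 - l) * V \<le> l\<^sup>2 / (2 * (1 - l / 3)) * V"
    using phi_bound[OF l0 l3] V by (intro mult_right_mono) auto
  also have "\<dots> = (t/D)\<^sup>2 / (2 * (V/D)) * V" using om by (simp add: l_def)
  also have "\<dots> = t\<^sup>2 / (2 * D)" using Vp Dp by (simp add: power2_eq_square field_simps)
  finally have "- (l * t) + (exp l - 1 - l) * V \<le> - (t\<^sup>2 / D) + t\<^sup>2 / (2 * D)"
    by (simp add: l_def power2_eq_square)
  also have "\<dots> = - (t\<^sup>2 / (2 * D))" by (simp add: field_simps)
  also have "\<dots> = - (N * d)" using key Dp by (simp add: D_def field_simps)
  finally show ?thesis using l0 by blast
qed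


theorem proposition2:
  fixes L :: nat
    and xi :: "nat \<Rightarrow> nat \<Rightarrow> real"
    and eta2 :: real
    and delta2 :: "nat \<Rightarrow> real"
    and p :: "(nat \<times> nat \<times> nat) list pmf"
  assumes L: "L \<ge> 2"
    and xi_bound: "\<And>M U. M \<le> L \<Longrightarrow> U \<le> 1 \<Longrightarrow> 0 \<le> cc L M U \<Longrightarrow> cc L M U \<le> 1
                      \<Longrightarrow> \<bar>xi M U\<bar> \<le> 1"
    and delta: "\<And>N. N \<ge> 1 \<Longrightarrow> exp (- (real N * delta2 N)) \<le> eta2"
    and support: "\<And>ws. ws \<in> set_pmf p \<Longrightarrow> set ws \<subseteq> W L"
    and cond: "\<And>ws. length ws \<ge> 1 \<Longrightarrow> set ws \<subseteq> W L \<Longrightarrow>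
        pmf p ws = measure_pmf.prob p {vs. mu_of vs = mu_of ws} *
          (\<Prod>(m, u, x)\<leftarrow>ws. (cc L m u) ^ x * (1 - cc L m u) ^ (1 - x))"
  shows "measure_pmf.prob p
           {ws. length ws \<ge> 1 \<and> seqtype ws \<notin> Pxi L xi (delta2 (length ws))} \<le> eta2"
proof -
  define E where "E = {ws. length ws \<ge> 1 \<and> seqtype ws \<notin> Pxi L xi (delta2 (length ws))}"
  define r where "r = map_pmf mu_of p"
  define Q where "Q = bind_pmf r (K L)"
  have eta0: "0 < eta2" using delta[of 1] by (meson exp_gt_zero less_le_trans order.refl)
  have xb: "\<bar>xi m u\<bar> \<le> 1" if "valid L (m, u)" for m u
    using valid_facts[OF L that] xi_bound by blast
  have step1: "measure_pmf.prob p E \<le> measure_pmf.prob Q E"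
    unfolding measure_pmf_conv_infsetsum
  proof (rule infsetsum_mono[OF pmf_abs_summable pmf_abs_summable])
    fix ws assume wsE: "ws \<in> E"
    show "pmf p ws \<le> pmf Q ws"
    proof (cases "ws \<in> set_pmf p")
      case False
      then show ?thesis by (simp add: set_pmf_iff)
    next
      case True
      have sw: "set ws \<subseteq> W L" using support[OF True] .
      have len: "length ws \<ge> 1" using wsE by (simp add: E_def)
      define a where "a = mu_of ws"
      have "pmf p ws = pmf r a * pmf (K L a) ws"
        using cond[OF len sw] pmfK[OF L sw] by (simp add: r_def pmf_map vimage_def a_def)
      also have "\<dots> \<le> pmf Q ws"
      proof -
        have "ennreal (pmf r a * pmf (K L a) ws) = (\<integral>\<^sup>+x. ennreal (pmf (K L a) ws) * indicator {a} x \<partial>r)"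
          by (subst nn_integral_cmult_indicator) (simp_all add: emeasure_pmf_single ennreal_mult mult.commute)
        also have "\<dots> \<le> (\<integral>\<^sup>+x. ennreal (pmf (K L x) ws) \<partial>r)"
          by (intro nn_integral_mono) (auto simp: indicator_def)
        also have "\<dots> = ennreal (pmf Q ws)" by (simp add: Q_def ennreal_pmf_bind)
        finally show ?thesis by (subst (asm) ennreal_le_iff) auto
      qed
      finally show ?thesis .
    qed
  qed
  have inner: "emeasure (K L mus) E \<le> ennreal eta2" if mr: "mus \<in> set_pmf r" for mus
  proof -
    obtain vs where vs: "vs \<in> set_pmf p" and mv: "mus = mu_of vs" using mr by (auto simp: r_def)
    have v: "\<forall>q\<in>set mus. valid L q"
      using support[OF vs] by (force simp: mv mu_of_def valid_def)
    have E_set: "emeasure (K L mus) E = emeasure (K L mus) (E \<inter> set_pmf (K L mus))"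
      by (simp add: emeasure_Int_set_pmf)
    show ?thesis
    proof (cases "mus = []")
      case True
      have "E \<inter> set_pmf (K L mus) = {}" using True by (auto simp: E_def)
      then show ?thesis using E_set by simp
    next
      case False
      define N where "N = length mus"
      define d where "d = delta2 N"
      have N1: "N \<ge> 1" using False by (simp add: N_def Suc_le_eq)
      have ed: "exp (- (real N * d)) \<le> eta2" using delta[OF N1] by (simp add: d_def)
      show ?thesis
      proof (cases "d \<le> 0")
        case True
        then have "1 \<le> eta2" using ed N1 by (smt (verit) exp_ge_add_one_self mult_nonneg_nonpos of_nat_0_le_iff)
        have "emeasure (K L mus) E \<le> 1" by (rule measure_pmf.emeasure_le_1)
        also have "\<dots> \<le> ennreal eta2" using \<open>1 \<le> eta2\<close> by simp
        finally show ?thesis .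
      next
        case False
        then have d0: "0 < d" by simp
        define V where "V = VV L xi mus"
        have V0: "0 \<le> V" unfolding V_def VV_def
        proof (rule sum_list_nonneg)
          fix z assume "z \<in> set (map (vf L xi) mus)"
          then obtain m u where "(m, u) \<in> set mus" "z = vf L xi (m, u)" by auto
          then show "0 \<le> z" using valid_facts[OF L, of m u] v by (auto simp: vf_def)
        qed
        define t where "t = real N * (d / 3 + sqrt ((d / 3)\<^sup>2 + 2 * d * (V / real N)))"
        obtain l where l0: "0 \<le> l" and lb: "- (l * t) + (exp l - 1 - l) * V \<le> - (real N * d)"
          using opt[of "real N" d V t] N1 d0 V0 t_def by auto
        have sub: "E \<inter> set_pmf (K L mus) \<subseteq> {ws. t < FF L xi ws}"
        proof
          fix ws assume ws: "ws \<in> E \<inter> set_pmf (K L mus)"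
          have "mu_of ws = mus" using setK[OF L v] ws by auto
          then have "length ws = N" by (auto simp: N_def mu_of_def)
          then have "seqtype ws \<notin> Pxi L xi d" using ws by (simp add: E_def d_def)
          then show "ws \<in> {ws. t < FF L xi ws}"
            using bad_event[OF L v \<open>mus \<noteq> []\<close>, of ws xi d] ws by (simp add: t_def N_def V_def)
        qed
        have "emeasure (K L mus) E \<le> emeasure (K L mus) {ws. t < FF L xi ws}"
          unfolding E_set by (intro emeasure_mono sub) simp
        also have "\<dots> \<le> ennreal (exp (- (l * t) + (exp l - 1 - l) * V))"
          unfolding V_def by (rule chernoff[OF L xb l0 v])
        also have "\<dots> \<le> ennreal eta2"
          using lb ed by (intro ennreal_leI) (meson exp_le_cancel_iff order.trans)
        finally show ?thesis .
      qed
    qed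
  qed
  have "emeasure Q E = (\<integral>\<^sup>+mus. emeasure (K L mus) E \<partial>r)" by (simp add: Q_def)
  also have "\<dots> \<le> (\<integral>\<^sup>+mus. ennreal eta2 \<partial>r)"
    by (intro nn_integral_mono_AE) (auto simp: AE_measure_pmf_iff inner)
  also have "\<dots> = ennreal eta2" by (simp add: measure_pmf.emeasure_space_1)
  finally have "measure_pmf.prob Q E \<le> eta2"
    using eta0 by (simp add: measure_pmf.emeasure_eq_measure)
  then show ?thesis using step1 by (simp add: E_def)
qed

end
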